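(* Let $0<\gamma<\frac n2$, $1\leq k<\frac n2-\gamma$, and let $\Sigma^{k+1}=\mathbb{H}^{k+1}/\pi$ be a closed hyperbolic manifold with Laplace eigenvalues $0=\lambda_0<\lambda_1\leq\lambda_2\leq\dots$ (repeated with multiplicity). For $m,\ell\in\mathbb{N}\cup\{0\}$ let $\mu_m=m(m+n-k-2)$, $a_m=\sqrt{\mu_m+(\frac{n-k-2}{2})^2}$, $b_\ell=\sqrt{\lambda_\ell-(\frac k2)^2}$ (with $b_\ell=i\sqrt{(\frac k2)^2-\lambda_\ell}$ if $\lambda_\ell<(\frac k2)^2$), and $$\Theta_{m,\ell}=4^\gamma\frac{\Gamma\big(\frac{1+\gamma}{2}+\frac{a_m+b_\ell i}{2}\big)}{\Gamma\big(\frac{1-\gamma}{2}+\frac{a_m+b_\ell i}{2}\big)}\,\frac{\Gamma\big(\frac{1+\gamma}{2}+\frac{a_m-b_\ell i}{2}\big)}{\Gamma\big(\frac{1-\gamma}{2}+\frac{a_m-b_\ell i}{2}\big)}.$$ Then $\Theta_{m+1,0}>\Theta_{m,0}$ and $\Theta_{m,\ell+1}\geq\Theta_{m,\ell}$ for all $m,\ell\in\mathbb{N}\cup\{0\}$.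
   Context: The numbers $\Theta_{m,\ell}$ are the (positive real) eigenvalues of the conformal fractional Laplacian of the product metric on $\mathbb{S}^{n-k-1}\times\Sigma^{k+1}$. *)

theory Defs
  imports "HOL-Analysis.Analysis"
begin

text \<open>mu_m = m (m + n - k - 2), eigenvalues of the sphere S^{n-k-1}.\<close>
definition mu_ev :: "nat \<Rightarrow> nat \<Rightarrow> nat \<Rightarrow> real" where
  "mu_ev n k m = real m * (real m + real n - real k - 2)"

definition a_coef :: "nat \<Rightarrow> nat \<Rightarrow> nat \<Rightarrow> real" where
  "a_coef n k m = sqrt (mu_ev n k m + ((real n - real k - 2) / 2)^2)"

definition b_coef :: "nat \<Rightarrow> real \<Rightarrow> complex" where
  "b_coef k lam = (if lam \<ge> (real k / 2)^2
      then complex_of_real (sqrt (lam - (real k / 2)^2))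
      else \<i> * complex_of_real (sqrt ((real k / 2)^2 - lam)))"

definition Theta :: "real \<Rightarrow> nat \<Rightarrow> nat \<Rightarrow> (nat \<Rightarrow> real) \<Rightarrow> nat \<Rightarrow> nat \<Rightarrow> complex" where
  "Theta \<gamma> n k lam m l =
     (let z1 = (complex_of_real (a_coef n k m) + b_coef k (lam l) * \<i>) / 2;
          z2 = (complex_of_real (a_coef n k m) - b_coef k (lam l) * \<i>) / 2
      in complex_of_real (4 powr \<gamma>)
         * (Gamma (complex_of_real ((1 + \<gamma>) / 2) + z1) / Gamma (complex_of_real ((1 - \<gamma>) / 2) + z1))
         * (Gamma (complex_of_real ((1 + \<gamma>) / 2) + z2) / Gamma (complex_of_real ((1 - \<gamma>) / 2) + z2)))"

end

theory Submission imports Defs begin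

lemma poch_pair:
  fixes Q s :: real and w :: complex
  assumes "w * w = - complex_of_real s"
  shows "pochhammer (complex_of_real Q + w) m * pochhammer (complex_of_real Q - w) m
         = complex_of_real (\<Prod>j<m. (Q + real j)^2 + s)"
proof -
  have "pochhammer (complex_of_real Q + w) m * pochhammer (complex_of_real Q - w) m
      = (\<Prod>j<m. (complex_of_real Q + w + of_nat j) * (complex_of_real Q - w + of_nat j))"
    by (simp add: pochhammer_prod atLeast0LessThan prod.distrib)
  also have "\<dots> = (\<Prod>j<m. complex_of_real ((Q + real j)^2 + s))"
  proof (rule prod.cong)
    fix j assume "j \<in> {..<m}"
    have "(complex_of_real Q + w + of_nat j) * (complex_of_real Q - w + of_nat j)
        = (complex_of_real Q + of_nat j)^2 - w * w" by (simp add: algebra_simps power2_eq_square)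
    also have "\<dots> = complex_of_real ((Q + real j)^2 + s)" using assms by simp
    finally show "(complex_of_real Q + w + of_nat j) * (complex_of_real Q - w + of_nat j)
        = complex_of_real ((Q + real j)^2 + s)" .
  qed simp
  finally show ?thesis by simp
qed

definition Hs :: "real \<Rightarrow> real \<Rightarrow> real \<Rightarrow> nat \<Rightarrow> real" where
  "Hs g Q s n = exp (2*g*ln (real n)) * ((\<Prod>j<n+1. (Q + real j)^2 + s) / (\<Prod>j<n+1. (Q + g + real j)^2 + s))"

lemma not_nonpos:
  fixes Q s :: real and w :: complex
  assumes "Q > 0" "w * w = - complex_of_real s" "Q^2 + s > 0"
  shows "complex_of_real Q + w \<notin> \<int>\<^sub>\<le>\<^sub>0" "complex_of_real Q - w \<notin> \<int>\<^sub>\<le>\<^sub>0"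
proof -
  have *: False if "complex_of_real Q + v = - of_nat N" "v * v = - complex_of_real s" for v N
  proof -
    have eq: "v = - complex_of_real (real N + Q)" using that(1) by (simp add: algebra_simps)
    have "complex_of_real ((real N + Q)^2) = v * v"
      unfolding eq by (simp only: of_real_mult power2_eq_square minus_mult_minus)
    then have "complex_of_real ((real N + Q)^2) = - complex_of_real s" using that(2) by simp
    then have "(real N + Q)^2 = - s" using of_real_eq_iff by (metis of_real_minus)
    moreover have "Q^2 \<le> (real N + Q)^2" using assms(1) by (intro power_mono) auto
    ultimately show False using assms(3) by linarith
  qed
  show "complex_of_real Q + w \<notin> \<int>\<^sub>\<le>\<^sub>0"
    using *[of w] assms(2) by (auto elim!: nonpos_Ints_cases')
  show "complex_of_real Q - w \<notin> \<int>\<^sub>\<le>\<^sub>0"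
    using *[of "-w"] assms(2) by (auto elim!: nonpos_Ints_cases')
qed

lemma field_aux:
  fixes f a b c d p1 p2 q1 q2 :: complex
  assumes "f \<noteq> 0" "c \<noteq> 0" "d \<noteq> 0" "q1 * q2 \<noteq> 0" "p1 * p2 \<noteq> 0"
  shows "(f*a/p1)*(f*b/p2)/((f*c/q1)*(f*d/q2)) = (a*b/(c*d)) * ((q1*q2)/(p1*p2))"
  using assms by (simp add: field_simps)

lemma key:
  fixes Q g s :: real and w :: complex
  assumes "Q > 0" "g > 0" "w * w = - complex_of_real s" "Q^2 + s > 0"
  shows "(\<lambda>n. complex_of_real (Hs g Q s n)) \<longlonglongrightarrow>
     Gamma (complex_of_real (Q+g) + w) / Gamma (complex_of_real Q + w) *
     (Gamma (complex_of_real (Q+g) - w) / Gamma (complex_of_real Q - w))"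
proof -
  define P where "P = Q + g"
  have "Q < P" using assms P_def by simp
  have pos: "0 < (R + real j)^2 + s" if "Q \<le> R" for R j
  proof -
    have "Q^2 \<le> (R + real j)^2" using assms(1) that by (intro power_mono) auto
    then show ?thesis using assms(4) by linarith
  qed
  have nz: "Gamma (complex_of_real Q + w) \<noteq> 0" "Gamma (complex_of_real Q - w) \<noteq> 0"
    using not_nonpos[OF assms(1,3,4)] by (auto intro!: Gamma_nonzero)
  have lim: "(\<lambda>n. Gamma_series (complex_of_real P + w) n * Gamma_series (complex_of_real P - w) n /
       (Gamma_series (complex_of_real Q + w) n * Gamma_series (complex_of_real Q - w) n))
     \<longlonglongrightarrow> Gamma (complex_of_real P + w) * Gamma (complex_of_real P - w) /
       (Gamma (complex_of_real Q + w) * Gamma (complex_of_real Q - w))"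
    by (intro tendsto_intros) (use nz in auto)
  have ev: "Gamma_series (complex_of_real P + w) n * Gamma_series (complex_of_real P - w) n /
       (Gamma_series (complex_of_real Q + w) n * Gamma_series (complex_of_real Q - w) n)
     = complex_of_real (Hs g Q s n)" if "n \<ge> 1" for n
  proof -
    define L where "L = complex_of_real (ln (real n))"
    have pq: "pochhammer (complex_of_real Q + w) (n+1) * pochhammer (complex_of_real Q - w) (n+1)
         = complex_of_real (\<Prod>j<n+1. (Q + real j)^2 + s)" by (rule poch_pair[OF assms(3)])
    have pp: "pochhammer (complex_of_real P + w) (n+1) * pochhammer (complex_of_real P - w) (n+1)
         = complex_of_real (\<Prod>j<n+1. (P + real j)^2 + s)" by (rule poch_pair[OF assms(3)])
    have pqnz: "(\<Prod>j<n+1. (Q + real j)^2 + s) \<noteq> 0"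
      proof -
      have "0 < (\<Prod>j<n+1. (Q + real j)^2 + s)" by (rule prod_pos) (use pos in auto)
      then show ?thesis by linarith
    qed
    have ppnz: "(\<Prod>j<n+1. (P + real j)^2 + s) \<noteq> 0"
      proof -
      have "0 < (\<Prod>j<n+1. (P + real j)^2 + s)" by (rule prod_pos) (use pos \<open>Q < P\<close> in auto)
      then show ?thesis by linarith
    qed
    have pqnz': "pochhammer (complex_of_real Q + w) (n+1) * pochhammer (complex_of_real Q - w) (n+1) \<noteq> 0"
      by (subst pq, simp only: of_real_eq_0_iff, rule pqnz)
    have ppnz': "pochhammer (complex_of_real P + w) (n+1) * pochhammer (complex_of_real P - w) (n+1) \<noteq> 0"
      by (subst pp, simp only: of_real_eq_0_iff, rule ppnz)
    have "Gamma_series (complex_of_real P + w) n * Gamma_series (complex_of_real P - w) n /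
       (Gamma_series (complex_of_real Q + w) n * Gamma_series (complex_of_real Q - w) n)
      = (exp ((complex_of_real P + w) * L) * exp ((complex_of_real P - w) * L) /
         (exp ((complex_of_real Q + w) * L) * exp ((complex_of_real Q - w) * L))) *
        ((pochhammer (complex_of_real Q + w) (n+1) * pochhammer (complex_of_real Q - w) (n+1)) /
         (pochhammer (complex_of_real P + w) (n+1) * pochhammer (complex_of_real P - w) (n+1)))"
      unfolding Gamma_series_def L_def
      by (intro field_aux pqnz' ppnz' exp_not_eq_zero fact_nonzero)
    also have "exp ((complex_of_real P + w) * L) * exp ((complex_of_real P - w) * L) /
         (exp ((complex_of_real Q + w) * L) * exp ((complex_of_real Q - w) * L))
       = exp (complex_of_real (2*g*ln (real n)))"
      unfolding exp_add[symmetric] exp_diff[symmetric] L_def P_def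
      by (simp add: algebra_simps)
    also have "\<dots> = complex_of_real (exp (2*g*ln (real n)))" by (simp only: exp_of_real)
    finally have X: "Gamma_series (complex_of_real P + w) n * Gamma_series (complex_of_real P - w) n /
       (Gamma_series (complex_of_real Q + w) n * Gamma_series (complex_of_real Q - w) n)
      = complex_of_real (exp (2*g*ln (real n))) * (complex_of_real (\<Prod>j<n+1. (Q + real j)^2 + s)
         / complex_of_real (\<Prod>j<n+1. (P + real j)^2 + s))" by (simp only: pq pp)
    show ?thesis unfolding X Hs_def P_def[symmetric] by (simp only: of_real_mult of_real_divide)
  qed
  have "(\<lambda>n. complex_of_real (Hs g Q s n)) \<longlonglongrightarrow>
       Gamma (complex_of_real P + w) * Gamma (complex_of_real P - w) /
       (Gamma (complex_of_real Q + w) * Gamma (complex_of_real Q - w))"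
    by (rule Lim_transform_eventually[OF lim]) (use ev in \<open>auto intro: eventually_sequentiallyI\<close>)
  then show ?thesis by (simp add: P_def)
qed

definition GRf :: "real \<Rightarrow> real \<Rightarrow> complex \<Rightarrow> complex" where
  "GRf g Q w = Gamma (complex_of_real (Q+g) + w) / Gamma (complex_of_real Q + w) *
     (Gamma (complex_of_real (Q+g) - w) / Gamma (complex_of_real Q - w))"

lemma key_re:
  fixes Q g s :: real and w :: complex
  assumes "Q > 0" "g > 0" "w * w = - complex_of_real s" "Q^2 + s > 0"
  shows "Hs g Q s \<longlonglongrightarrow> Re (GRf g Q w)" "Re (GRf g Q w) > 0"
proof -
  define GR where "GR = GRf g Q w"
  have k: "(\<lambda>n. complex_of_real (Hs g Q s n)) \<longlonglongrightarrow> GR"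
    unfolding GR_def GRf_def by (rule key[OF assms(1-4)])
  from tendsto_Re[OF k] have lim: "Hs g Q s \<longlonglongrightarrow> Re GR" by simp
  then show "Hs g Q s \<longlonglongrightarrow> Re (GRf g Q w)" unfolding GR_def .
  from tendsto_of_real[OF lim, where 'a=complex] have "(\<lambda>n. complex_of_real (Hs g Q s n)) \<longlonglongrightarrow> complex_of_real (Re GR)" .
  from LIMSEQ_unique[OF k this] have eq: "GR = complex_of_real (Re GR)" .
  have P2: "(Q+g)^2 + s > 0"
  proof -
    have "Q^2 \<le> (Q+g)^2" using assms by (intro power_mono) auto
    then show ?thesis using assms by linarith
  qed
  have "Q + g > 0" using assms by simp
  note n1 = not_nonpos[OF assms(1,3,4)] and n2 = not_nonpos[OF \<open>Q+g>0\<close> assms(3) P2]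
  have "GR \<noteq> 0" unfolding GR_def GRf_def using n1 n2 by (auto simp: Gamma_eq_zero_iff)
  then have ne: "Re GR \<noteq> 0" using eq by (metis of_real_0)
  have pos: "0 \<le> Hs g Q s n" for n
  proof -
    have "0 < (\<Prod>j<n+1. (Q + real j)^2 + s)"
    proof (rule prod_pos)
      fix j assume "j \<in> {..<n+1}"
      have "Q^2 \<le> (Q + real j)^2" using assms by (intro power_mono) auto
      then show "0 < (Q + real j)^2 + s" using assms by linarith
    qed
    moreover have "0 < (\<Prod>j<n+1. (Q + g + real j)^2 + s)"
    proof (rule prod_pos)
      fix j assume "j \<in> {..<n+1}"
      have "Q^2 \<le> (Q + g + real j)^2" using assms by (intro power_mono) auto
      then show "0 < (Q + g + real j)^2 + s" using assms by linarith
    qed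
    ultimately show ?thesis unfolding Hs_def by simp
  qed
  have "0 \<le> Re GR" by (rule LIMSEQ_le_const[OF lim]) (use pos in auto)
  with ne show "Re (GRf g Q w) > 0" unfolding GR_def by simp
qed

lemma frac_mono:
  fixes X Y s1 s2 :: real
  assumes "0 < X + s1" "X \<le> Y" "s1 \<le> s2"
  shows "(X+s1)/(Y+s1) \<le> (X+s2)/(Y+s2)"
proof -
  have "(X+s1)*(Y+s2) - (X+s2)*(Y+s1) = (s2-s1)*(X-Y)" by (simp add: algebra_simps)
  also have "\<dots> \<le> 0" using assms by (intro mult_nonneg_nonpos) auto
  finally have "(X+s1)*(Y+s2) \<le> (X+s2)*(Y+s1)" by simp
  moreover have "0 < Y + s1" "0 < Y + s2" using assms by auto
  ultimately show ?thesis by (simp add: divide_simps)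
qed

lemma phi_strict:
  fixes x y s g :: real
  assumes "0 < x" "x < y" "s \<le> 0" "x^2 + s > 0" "g > 0"
  shows "(x^2+s)/((x+g)^2+s) < (y^2+s)/((y+g)^2+s)"
proof -
  have "(y^2+s)*((x+g)^2+s) - (x^2+s)*((y+g)^2+s) = g * (y - x) * (2 * x * y - 2 * s + g * (x + y))"
    by (simp add: algebra_simps power2_eq_square)
  also have "\<dots> > 0"
  proof -
    have "0 < x*y" "0 < g*(x+y)" using assms by auto
    then have "0 < 2 * x * y - 2 * s + g * (x + y)" using assms(3) by linarith
    then show ?thesis using assms by (intro mult_pos_pos) auto
  qed
  finally have "(x^2+s)*((y+g)^2+s) < (y^2+s)*((x+g)^2+s)" by simp
  moreover have h: "x^2 \<le> (x+g)^2" "x^2 \<le> (y+g)^2" using assms by (auto intro!: power_mono)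
  have "0 < (x+g)^2+s" "0 < (y+g)^2+s" using h assms(4) by linarith+
  ultimately show ?thesis by (simp add: divide_simps)
qed

lemma Hs_prod: "Hs g Q s n = exp (2*g*ln (real n)) * (\<Prod>j<n+1. ((Q + real j)^2 + s) / ((Q + g + real j)^2 + s))"
  unfolding Hs_def by (simp add: prod_dividef)

lemma Hs_mono_s:
  assumes "Q > 0" "g > 0" "Q^2 + s1 > 0" "s1 \<le> s2"
  shows "Hs g Q s1 n \<le> Hs g Q s2 n"
  unfolding Hs_prod
proof (intro mult_left_mono prod_mono conjI)
  fix j assume "j \<in> {..<n+1}"
  have a: "Q^2 \<le> (Q + real j)^2" using assms by (intro power_mono) auto
  have b: "(Q + real j)^2 \<le> (Q + g + real j)^2" using assms by (intro power_mono) auto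
  show "0 \<le> ((Q + real j)^2 + s1) / ((Q + g + real j)^2 + s1)"
    using a b assms(3) by (intro divide_nonneg_nonneg; linarith)
  show "((Q + real j)^2 + s1) / ((Q + g + real j)^2 + s1) \<le> ((Q + real j)^2 + s2) / ((Q + g + real j)^2 + s2)"
    using a b assms(3,4) by (intro frac_mono; linarith)
qed simp

lemma Hs_mono_Q:
  assumes "Q > 0" "g > 0" "Q^2 + s > 0" "s \<le> 0" "Q < Q'"
  defines "c \<equiv> ((Q'^2+s)/((Q'+g)^2+s)) / ((Q^2+s)/((Q+g)^2+s))"
  shows "c * Hs g Q s n \<le> Hs g Q' s n" "c > 1"
proof -
  define f where "f = (\<lambda>x::real. (x^2+s)/((x+g)^2+s))"
  have fpos: "0 < f x" if "Q \<le> x" for x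
  proof -
    have "Q^2 \<le> x^2" "x^2 \<le> (x+g)^2" using assms that by (auto intro!: power_mono)
    then show ?thesis unfolding f_def using assms by (intro divide_pos_pos) auto
  qed
  have fle: "f x \<le> f y" if "Q \<le> x" "x < y" for x y
  proof -
    have "Q^2 \<le> x^2" using assms that by (auto intro!: power_mono)
    then have "0 < x^2 + s" using assms(3) by linarith
    then show ?thesis unfolding f_def using assms that by (intro less_imp_le[OF phi_strict]) auto
  qed
  have "f Q < f Q'" unfolding f_def using assms by (intro phi_strict) auto
  moreover have cf: "c = f Q' / f Q" by (simp add: c_def f_def)
  ultimately show "c > 1" using fpos[of Q] by (simp add: less_divide_eq_1_pos)
  have "c * f Q = f Q'" unfolding cf using fpos[of Q] by simp
  have "c * Hs g Q s n = exp (2*g*ln (real n)) * (c * f Q * (\<Prod>j<n. f (Q + real (Suc j))))"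
    unfolding Hs_prod f_def prod.lessThan_Suc_shift[where n=n, simplified Suc_eq_plus1] by (simp add: algebra_simps)
  also have "\<dots> \<le> exp (2*g*ln (real n)) * (f Q' * (\<Prod>j<n. f (Q' + real (Suc j))))"
    unfolding \<open>c * f Q = f Q'\<close>
    using fpos \<open>Q < Q'\<close> by (intro mult_left_mono prod_mono conjI fle less_imp_le[OF fpos]) auto
  also have "\<dots> = Hs g Q' s n"
    unfolding Hs_prod f_def prod.lessThan_Suc_shift[where n=n, simplified Suc_eq_plus1] by (simp add: algebra_simps)
  finally show "c * Hs g Q s n \<le> Hs g Q' s n" .
qed

lemma b_sq: "b_coef k lam * b_coef k lam = complex_of_real (lam - (real k / 2)^2)"
proof (cases "lam \<ge> (real k / 2)^2")
  case True
  define x where "x = lam - (real k / 2)^2"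
  have x0: "sqrt x * sqrt x = x" using True unfolding x_def by simp
  have "b_coef k lam = complex_of_real (sqrt x)" using True by (simp add: b_coef_def x_def)
  then have "b_coef k lam * b_coef k lam = complex_of_real (sqrt x * sqrt x)"
    by (simp only: of_real_mult)
  then show ?thesis by (simp only: x0[unfolded x_def] x0 x_def)
next
  case False
  define x where "x = (real k / 2)^2 - lam"
  have x0: "sqrt x * sqrt x = x" using False unfolding x_def by simp
  have "b_coef k lam = \<i> * complex_of_real (sqrt x)" using False by (simp add: b_coef_def x_def)
  then have "b_coef k lam * b_coef k lam = (\<i> * \<i>) * complex_of_real (sqrt x * sqrt x)"
    by (simp only: of_real_mult mult_ac)
  also have "\<dots> = complex_of_real (lam - (real k / 2)^2)" by (simp only: x0[unfolded x_def] x0 x_def) simp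
  finally show ?thesis .
qed

definition QQ :: "real \<Rightarrow> nat \<Rightarrow> nat \<Rightarrow> nat \<Rightarrow> real" where
  "QQ \<gamma> n k m = (1 - \<gamma>) / 2 + a_coef n k m / 2"
definition WW :: "nat \<Rightarrow> real \<Rightarrow> complex" where
  "WW k x = b_coef k x * \<i> / 2"
definition SS :: "nat \<Rightarrow> real \<Rightarrow> real" where
  "SS k x = (x - (real k / 2)^2) / 4"

lemma theta_eq:
  "Theta \<gamma> n k lam m l = complex_of_real (4 powr \<gamma>) * GRf \<gamma> (QQ \<gamma> n k m) (WW k (lam l))"
  "WW k x * WW k x = - complex_of_real (SS k x)"
proof -
  define Q where "Q = QQ \<gamma> n k m"
  define w where "w = WW k (lam l)"
  have e1: "complex_of_real ((1 + \<gamma>) / 2) + (complex_of_real (a_coef n k m) + b_coef k (lam l) * \<i>) / 2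
      = complex_of_real (Q+\<gamma>) + w"
    unfolding Q_def w_def QQ_def WW_def by (simp add: field_simps)
  have e2: "complex_of_real ((1 - \<gamma>) / 2) + (complex_of_real (a_coef n k m) + b_coef k (lam l) * \<i>) / 2
      = complex_of_real Q + w"
    unfolding Q_def w_def QQ_def WW_def by (simp add: field_simps)
  have e3: "complex_of_real ((1 + \<gamma>) / 2) + (complex_of_real (a_coef n k m) - b_coef k (lam l) * \<i>) / 2
      = complex_of_real (Q+\<gamma>) - w"
    unfolding Q_def w_def QQ_def WW_def by (simp add: field_simps)
  have e4: "complex_of_real ((1 - \<gamma>) / 2) + (complex_of_real (a_coef n k m) - b_coef k (lam l) * \<i>) / 2
      = complex_of_real Q - w"
    unfolding Q_def w_def QQ_def WW_def by (simp add: field_simps)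
  show "Theta \<gamma> n k lam m l = complex_of_real (4 powr \<gamma>) * GRf \<gamma> (QQ \<gamma> n k m) (WW k (lam l))"
    unfolding Theta_def Let_def e1 e2 e3 e4 GRf_def Q_def w_def by (rule mult.assoc)
  have "WW k x * WW k x = (b_coef k x * b_coef k x) * (\<i> * \<i>) / 4"
    unfolding WW_def by (simp add: field_simps)
  then show "WW k x * WW k x = - complex_of_real (SS k x)"
    unfolding b_sq SS_def by (simp add: field_simps)
qed

lemma Re_ofr: "Re (complex_of_real r * z) = r * Re z" by simp

lemma theta_lim:
  assumes "0 < \<gamma>" "0 < QQ \<gamma> n k m" "(QQ \<gamma> n k m)^2 + SS k (lam l) > 0"
  shows "(\<lambda>i. 4 powr \<gamma> * Hs \<gamma> (QQ \<gamma> n k m) (SS k (lam l)) i) \<longlonglongrightarrow> Re (Theta \<gamma> n k lam m l)"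
proof -
  have "(\<lambda>i. 4 powr \<gamma> * Hs \<gamma> (QQ \<gamma> n k m) (SS k (lam l)) i) \<longlonglongrightarrow> 4 powr \<gamma> * Re (GRf \<gamma> (QQ \<gamma> n k m) (WW k (lam l)))"
    by (rule tendsto_mult_left[OF key_re(1)[OF assms(2) assms(1) theta_eq(2) assms(3)]])
  moreover have "Re (Theta \<gamma> n k lam m l) = 4 powr \<gamma> * Re (GRf \<gamma> (QQ \<gamma> n k m) (WW k (lam l)))"
    unfolding theta_eq(1) by (rule Re_ofr)
  ultimately show ?thesis by simp
qed

lemma theta_pos:
  assumes "0 < \<gamma>" "0 < QQ \<gamma> n k m" "(QQ \<gamma> n k m)^2 + SS k (lam l) > 0"
  shows "Re (Theta \<gamma> n k lam m l) > 0"
proof -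
  have "Re (Theta \<gamma> n k lam m l) = 4 powr \<gamma> * Re (GRf \<gamma> (QQ \<gamma> n k m) (WW k (lam l)))"
    unfolding theta_eq(1) by (rule Re_ofr)
  then show ?thesis using key_re(2)[OF assms(2) assms(1) theta_eq(2) assms(3)] by simp
qed

theorem proposition3p8:
  fixes \<gamma> :: real and n k :: nat and lam :: "nat \<Rightarrow> real"
  assumes "0 < \<gamma>" and "\<gamma> < real n / 2"
    and "1 \<le> k" and "real k < real n / 2 - \<gamma>"
    and "lam 0 = 0" and "0 < lam 1" and "mono lam"
  shows "(\<forall>m. Re (Theta \<gamma> n k lam (Suc m) 0) > Re (Theta \<gamma> n k lam m 0)) \<and>
         (\<forall>m l. Re (Theta \<gamma> n k lam m (Suc l)) \<ge> Re (Theta \<gamma> n k lam m l))"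
proof -
  define Q where "Q = QQ \<gamma> n k"
  define s where "s = (\<lambda>l. SS k (lam l))"
  have lam0: "0 \<le> lam l" for l using assms(5,7) by (metis le0 monoD)
  have "real n > real k + 1" using assms(1,3,4) by linarith
  then have "n \<ge> k + 2" by linarith
  then have nk: "real n - real k - 2 \<ge> 0" by linarith
  have a: "a_coef n k m = real m + (real n - real k - 2) / 2" for m
  proof -
    have "mu_ev n k m + ((real n - real k - 2) / 2)^2 = (real m + (real n - real k - 2) / 2)^2"
      unfolding mu_ev_def by (simp add: power2_eq_square algebra_simps)
    then show ?thesis unfolding a_coef_def using nk by simp
  qed
  have Qk: "Q m > real k / 4" for m
  proof -
    have "Q m = (real n - real k - 2 * \<gamma>) / 4 + real m / 2" unfolding Q_def QQ_def a by (simp add: field_simps)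
    moreover have "real m / 2 \<ge> 0" by simp
    moreover have "real n - real k - 2 * \<gamma> > real k" using assms(4) by linarith
    then have "(real n - real k - 2 * \<gamma>) / 4 > real k / 4" by (simp add: divide_strict_right_mono)
    ultimately show ?thesis by linarith
  qed
  have Qpos: "Q m > 0" for m using Qk[of m] by (smt (verit) of_nat_0_le_iff divide_nonneg_pos)
  have Qs: "(Q m)^2 + s l > 0" for m l
  proof -
    have "(real k / 4)^2 < (Q m)^2" using Qk[of m] by (intro power_strict_mono) auto
    moreover have "s l + (real k / 4)^2 = lam l / 4" unfolding s_def SS_def by (simp add: power2_eq_square field_simps)
    then have "0 \<le> s l + (real k / 4)^2" using lam0[of l] by simp
    ultimately show ?thesis by linarith
  qed
  have lim: "(\<lambda>i. 4 powr \<gamma> * Hs \<gamma> (Q m) (s l) i) \<longlonglongrightarrow> Re (Theta \<gamma> n k lam m l)" for m l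
    using theta_lim[where lam=lam and l=l, OF assms(1) Qpos[of m, unfolded Q_def] Qs[of m l, unfolded Q_def s_def]]
    unfolding Q_def s_def .
  have part2: "Re (Theta \<gamma> n k lam m (Suc l)) \<ge> Re (Theta \<gamma> n k lam m l)" for m l
  proof (rule LIMSEQ_le[OF lim lim])
    have "s l \<le> s (Suc l)" unfolding s_def SS_def using assms(7) by (simp add: monoD)
    then show "\<exists>N. \<forall>i\<ge>N. 4 powr \<gamma> * Hs \<gamma> (Q m) (s l) i \<le> 4 powr \<gamma> * Hs \<gamma> (Q m) (s (Suc l)) i"
      using Qpos Qs assms(1) by (intro exI[of _ 0] allI impI mult_left_mono Hs_mono_s) auto
  qed
  have part1: "Re (Theta \<gamma> n k lam (Suc m) 0) > Re (Theta \<gamma> n k lam m 0)" for m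
  proof -
    have QS: "Q (Suc m) = Q m + 1/2" unfolding Q_def QQ_def a by (simp add: field_simps)
    have s0: "s 0 \<le> 0" unfolding s_def SS_def using assms(5) by simp
    have QL: "Q m < Q m + 1/2" by simp
    note H = Hs_mono_Q[OF Qpos[of m] assms(1) Qs[of m 0] s0 QL]
    define c where "c = (((Q m + 1/2)^2 + s 0) / ((Q m + 1/2 + \<gamma>)^2 + s 0)) / (((Q m)^2 + s 0) / ((Q m + \<gamma>)^2 + s 0))"
    have c1: "c > 1" using H(2) unfolding c_def .
    have "c * Re (Theta \<gamma> n k lam m 0) \<le> Re (Theta \<gamma> n k lam (Suc m) 0)"
    proof (rule LIMSEQ_le[OF tendsto_mult_left[OF lim] lim])
      show "\<exists>N. \<forall>i\<ge>N. c * (4 powr \<gamma> * Hs \<gamma> (Q m) (s 0) i) \<le> 4 powr \<gamma> * Hs \<gamma> (Q (Suc m)) (s 0) i"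
      proof (intro exI[of _ 0] allI impI)
        fix i :: nat
        have "c * (4 powr \<gamma> * Hs \<gamma> (Q m) (s 0) i) = 4 powr \<gamma> * (c * Hs \<gamma> (Q m) (s 0) i)" by simp
        also have "\<dots> \<le> 4 powr \<gamma> * Hs \<gamma> (Q (Suc m)) (s 0) i"
          unfolding QS c_def by (intro mult_left_mono H(1)) auto
        finally show "c * (4 powr \<gamma> * Hs \<gamma> (Q m) (s 0) i) \<le> 4 powr \<gamma> * Hs \<gamma> (Q (Suc m)) (s 0) i" .
      qed
    qed
    moreover have "Re (Theta \<gamma> n k lam m 0) > 0"
      by (rule theta_pos[where lam=lam and l=0, OF assms(1) Qpos[of m, unfolded Q_def] Qs[of m 0, unfolded Q_def s_def]])
    moreover have "Re (Theta \<gamma> n k lam m 0) < c * Re (Theta \<gamma> n k lam m 0)"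
      using c1 calculation(2) by simp
    ultimately show ?thesis by linarith
  qed
  show ?thesis using part1 part2 by blast
qed

end
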